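(* Let $f$ satisfy (f1) and suppose $f_0=+\infty$ and $f_\infty=0$. Then for every $\lambda\in(0,+\infty)$, problem (MO) has two solutions $u^+$ and $u^-$ such that $u^+$ is positive and strictly concave in $(0,1)$ and $u^-$ is negative and strictly convex in $(0,1)$.
   Context: Let $N\ge 1$ be an integer and $f:\mathbb{R}\to\mathbb{R}$ continuous. For $\lambda\ge 0$, problem (MO) is: find $u\in C^2[0,1]$ with $\left((u'(r))^N\right)'=\lambda^N N r^{N-1} f(-u(r))$ for $0<r<1$ and $u'(0)=u(1)=0$. Condition (f1): $f\in C(\mathbb{R},\mathbb{R})$ and $f(s)s^N>0$ for all $s\neq0$. The quantities $f_0,f_\infty\in[0,+\infty]$ are defined by $f_0^N=\lim_{s\to0} f(s)/s^N$ and $f_\infty^N=\lim_{|s|\to+\infty} f(s)/s^N$ (limits assumed to exist in $[0,+\infty]$). *)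

theory Defs
  imports "HOL-Analysis.Analysis"
begin

definition strictly_convex_on :: "real set \<Rightarrow> (real \<Rightarrow> real) \<Rightarrow> bool" where
  "strictly_convex_on S u \<longleftrightarrow> convex S \<and>
     (\<forall>x\<in>S. \<forall>y\<in>S. \<forall>t::real. x \<noteq> y \<and> 0 < t \<and> t < 1 \<longrightarrow>
        u ((1 - t) * x + t * y) < (1 - t) * u x + t * u y)"

definition strictly_concave_on :: "real set \<Rightarrow> (real \<Rightarrow> real) \<Rightarrow> bool" where
  "strictly_concave_on S u \<longleftrightarrow> strictly_convex_on S (\<lambda>x. - u x)"

definition C2_on_unit :: "(real \<Rightarrow> real) \<Rightarrow> (real \<Rightarrow> real) \<Rightarrow> (real \<Rightarrow> real) \<Rightarrow> bool" where
  "C2_on_unit u u' u'' \<longleftrightarrow>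
     (\<forall>x\<in>{0..1}. (u has_real_derivative u' x) (at x within {0..1})) \<and>
     (\<forall>x\<in>{0..1}. (u' has_real_derivative u'' x) (at x within {0..1})) \<and>
     continuous_on {0..1} u''"

definition solves_MO :: "nat \<Rightarrow> real \<Rightarrow> (real \<Rightarrow> real) \<Rightarrow> (real \<Rightarrow> real) \<Rightarrow> bool" where
  "solves_MO N lam f u \<longleftrightarrow>
     (\<exists>u' u''. C2_on_unit u u' u'' \<and>
        (\<forall>r. 0 < r \<and> r < 1 \<longrightarrow>
           ((\<lambda>s. (u' s) ^ N) has_real_derivative
              (lam ^ N * real N * r ^ (N - 1) * f (- u r))) (at r)) \<and>
        u' 0 = 0 \<and> u 1 = 0)"

end

theory Submission
  imports Defs "HOL-Library.Diagonal_Subsequence"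
begin

lemma int_pow_deriv:
  fixes c :: real and N :: nat
  assumes "0 \<le> c" "N \<ge> 1"
  shows "integral {0..c} (\<lambda>t. real N * t^(N-1)) = c^N"
proof -
  have "((\<lambda>t. real N * t^(N-1)) has_integral (c^N - 0^N)) {0..c}"
    apply (rule fundamental_theorem_of_calculus)
    using assms by (auto intro!: derivative_eq_intros simp: has_real_derivative_iff_has_vector_derivative[symmetric])
  moreover have "(0::real)^N = 0" using assms by simp
  ultimately have "((\<lambda>t. real N * t^(N-1)) has_integral c^N) {0..c}" by simp
  then show ?thesis by (rule integral_unique)
qed

lemma cont_int:
  fixes F :: "real \<Rightarrow> real"
  assumes "continuous_on {0..1} F" "0 \<le> x" "x \<le> y" "y \<le> 1"
  shows "F integrable_on {x..y}"
proof -
  have "continuous_on {x..y} F" by (rule continuous_on_subset[OF assms(1)]) (use assms in auto)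
  then show ?thesis by (rule integrable_continuous_interval)
qed

lemma int_diff:
  fixes F :: "real \<Rightarrow> real"
  assumes "continuous_on {0..1} F" "0 \<le> x" "x \<le> y" "y \<le> 1"
  shows "integral {0..y} F - integral {0..x} F = integral {x..y} F"
  using Henstock_Kurzweil_Integration.integral_combine[where a=0 and c=x and b=y and f=F] cont_int[OF assms(1), of 0 y] assms by simp

lemma int_mono0:
  fixes F :: "real \<Rightarrow> real"
  assumes "continuous_on {0..1} F" "0 \<le> x" "x \<le> y" "y \<le> 1" "\<And>t. t\<in>{x..y} \<Longrightarrow> 0 \<le> F t"
  shows "integral {0..x} F \<le> integral {0..y} F"
  using int_diff[OF assms(1-4)] integral_nonneg[OF cont_int[OF assms(1)], of x y] assms by force

lemma int_lower:
  fixes F :: "real \<Rightarrow> real"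
  assumes "continuous_on {0..1} F" "0 \<le> x" "x \<le> y" "y \<le> 1" "\<And>t. t\<in>{x..y} \<Longrightarrow> c \<le> F t"
  shows "c * (y - x) \<le> integral {0..y} F - integral {0..x} F"
proof -
  have "integral {x..y} (\<lambda>_. c) \<le> integral {x..y} F"
    by (rule integral_le) (use cont_int[OF assms(1)] assms in auto)
  then show ?thesis using int_diff[OF assms(1-4)] assms by (simp add: mult.commute)
qed

lemma int_upper:
  fixes F :: "real \<Rightarrow> real"
  assumes "continuous_on {0..1} F" "0 \<le> x" "x \<le> y" "y \<le> 1" "\<And>t. t\<in>{x..y} \<Longrightarrow> F t \<le> c"
  shows "integral {0..y} F - integral {0..x} F \<le> c * (y - x)"
proof -
  have "integral {x..y} F \<le> integral {x..y} (\<lambda>_. c)"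
    by (rule integral_le) (use cont_int[OF assms(1)] assms in auto)
  then show ?thesis using int_diff[OF assms(1-4)] assms by (simp add: mult.commute)
qed

lemma int_cont:
  fixes F :: "real \<Rightarrow> real"
  assumes "continuous_on {0..1} F"
  shows "continuous_on {0..1} (\<lambda>x. integral {0..x} F)"
  by (rule indefinite_integral_continuous_1) (rule integrable_continuous_interval[OF assms])

locale moloc =
  fixes N :: nat and lam M :: real and G :: "real \<Rightarrow> real"
  assumes N1: "N \<ge> 1" and lam: "lam > 0" and Gcont: "\<And>x. isCont G x"
    and G0: "\<And>x. 0 \<le> G x" and GM: "\<And>x. G x \<le> M"

context moloc
begin

lemma M0: "0 \<le> M" using G0[of 0] GM[of 0] by linarith

definition Wf :: "real \<Rightarrow> (real \<Rightarrow> real) \<Rightarrow> real \<Rightarrow> real" where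
  "Wf h v s = integral {0..s} (\<lambda>t. real N * t^(N-1) * G (v (max (t-h) 0)))"

definition Dop :: "real \<Rightarrow> real \<Rightarrow> (real \<Rightarrow> real) \<Rightarrow> real \<Rightarrow> real" where
  "Dop a h v r = a - lam * integral {0..r} (\<lambda>s. root N (Wf h v s))"

lemma Wint_cont:
  assumes "h \<ge> 0" "continuous_on {0..1} v"
  shows "continuous_on {0..1} (\<lambda>t. real N * t^(N-1) * G (v (max (t-h) 0)))"
proof -
  have "continuous_on {0..1} (\<lambda>t. max (t-h) (0::real))" by (intro continuous_intros)
  moreover have "(\<lambda>t. max (t-h) 0) ` {0..1} \<subseteq> {0..1}" using assms by auto
  ultimately have "continuous_on {0..1} (\<lambda>t. v (max (t-h) 0))"
    using continuous_on_compose2[OF assms(2)] by blast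
  moreover have "continuous_on UNIV G" using Gcont by (simp add: continuous_at_imp_continuous_on)
  ultimately have "continuous_on {0..1} (\<lambda>t. G (v (max (t-h) 0)))"
    using continuous_on_compose2[of UNIV G] by blast
  then show ?thesis by (intro continuous_intros)
qed

lemma Wint_nonneg: "0 \<le> t \<Longrightarrow> 0 \<le> real N * t^(N-1) * G x"
  using G0[of x] by simp

lemma Wint_le: "0 \<le> t \<Longrightarrow> real N * t^(N-1) * G x \<le> M * (real N * t^(N-1))"
proof -
  assume "0 \<le> t"
  then have "0 \<le> real N * t^(N-1)" by simp
  from mult_right_mono[OF GM[of x] this] show ?thesis by (simp add: mult.commute)
qed

lemma Wf_cont: "h \<ge> 0 \<Longrightarrow> continuous_on {0..1} v \<Longrightarrow> continuous_on {0..1} (Wf h v)"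
  unfolding Wf_def by (rule int_cont) (rule Wint_cont)

lemma Wf_nonneg:
  assumes "h \<ge> 0" "continuous_on {0..1} v" "s \<in> {0..1}"
  shows "0 \<le> Wf h v s"
  unfolding Wf_def
  by (rule integral_nonneg[OF cont_int[OF Wint_cont[OF assms(1,2)]]]) (use assms Wint_nonneg in auto)

lemma Wf_le:
  assumes "h \<ge> 0" "continuous_on {0..1} v" "s \<in> {0..1}"
  shows "Wf h v s \<le> M * s^N"
proof -
  have "Wf h v s \<le> integral {0..s} (\<lambda>t. M * (real N * t^(N-1)))"
    unfolding Wf_def
    by (rule integral_le[OF cont_int[OF Wint_cont[OF assms(1,2)]]])
      (use assms Wint_le in \<open>auto intro!: integrable_continuous_interval continuous_intros\<close>)
  also have "\<dots> = M * s^N" using int_pow_deriv[of s N] N1 assms by simp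
  finally show ?thesis .
qed

lemma Wf_leM:
  assumes "h \<ge> 0" "continuous_on {0..1} v" "s \<in> {0..1}"
  shows "Wf h v s \<le> M"
proof -
  have "s^N \<le> 1" using assms by (auto intro: power_le_one)
  then have "M * s^N \<le> M" using M0 by (simp add: mult_left_le)
  then show ?thesis using Wf_le[OF assms] by linarith
qed

lemma Wf_mono:
  assumes "h \<ge> 0" "continuous_on {0..1} v" "0 \<le> x" "x \<le> y" "y \<le> 1"
  shows "Wf h v x \<le> Wf h v y"
  unfolding Wf_def
  by (rule int_mono0[OF Wint_cont[OF assms(1,2)]]) (use assms Wint_nonneg in auto)

lemma R_cont: "h \<ge> 0 \<Longrightarrow> continuous_on {0..1} v \<Longrightarrow> continuous_on {0..1} (\<lambda>s. root N (Wf h v s))"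
  by (intro continuous_on_real_root Wf_cont)

lemma R_bounds:
  assumes "h \<ge> 0" "continuous_on {0..1} v" "s \<in> {0..1}"
  shows "0 \<le> root N (Wf h v s)" "root N (Wf h v s) \<le> root N M"
  using Wf_nonneg[OF assms] Wf_leM[OF assms] N1 by (auto simp: real_root_le_iff)

lemma Dop_0: "Dop a h v 0 = a" by (simp add: Dop_def)

lemma Dop_cont: "h \<ge> 0 \<Longrightarrow> continuous_on {0..1} v \<Longrightarrow> continuous_on {0..1} (Dop a h v)"
  unfolding Dop_def by (intro continuous_intros int_cont R_cont)

lemma Dop_diff:
  assumes "h \<ge> 0" "continuous_on {0..1} v" "0 \<le> x" "x \<le> y" "y \<le> 1"
  shows "0 \<le> Dop a h v x - Dop a h v y" "Dop a h v x - Dop a h v y \<le> lam * root N M * (y - x)"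
proof -
  have "0 * (y - x) \<le> integral {0..y} (\<lambda>s. root N (Wf h v s)) - integral {0..x} (\<lambda>s. root N (Wf h v s))"
    by (rule int_lower[OF R_cont[OF assms(1,2)]]) (use assms R_bounds in auto)
  moreover have "integral {0..y} (\<lambda>s. root N (Wf h v s)) - integral {0..x} (\<lambda>s. root N (Wf h v s)) \<le> root N M * (y - x)"
    by (rule int_upper[OF R_cont[OF assms(1,2)]]) (use assms R_bounds in auto)
  moreover have "Dop a h v x - Dop a h v y = lam * (integral {0..y} (\<lambda>s. root N (Wf h v s)) - integral {0..x} (\<lambda>s. root N (Wf h v s)))"
    unfolding Dop_def by (simp add: algebra_simps)
  ultimately show "0 \<le> Dop a h v x - Dop a h v y" "Dop a h v x - Dop a h v y \<le> lam * root N M * (y - x)"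
    using lam mult_left_mono[of _ "root N M * (y - x)" lam] by (auto simp: mult.assoc)
qed

lemma Dop_le:
  assumes "h \<ge> 0" "continuous_on {0..1} v" "r \<in> {0..1}"
  shows "Dop a h v r \<le> a" "a - lam * root N M \<le> Dop a h v r"
proof -
  have "lam * root N M * (r - 0) \<le> lam * root N M"
    using assms lam M0 N1 by (auto intro!: mult_left_le)
  then show "Dop a h v r \<le> a" "a - lam * root N M \<le> Dop a h v r"
    using Dop_diff[OF assms(1,2), of 0 r a] assms Dop_0[of a h v] by auto
qed

lemma Dop_lip:
  assumes "h \<ge> 0" "continuous_on {0..1} v" "x \<in> {0..1}" "y \<in> {0..1}"
  shows "\<bar>Dop a h v x - Dop a h v y\<bar> \<le> lam * root N M * \<bar>x - y\<bar>"
proof (cases "x \<le> y")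
  case True then show ?thesis using Dop_diff[OF assms(1,2), of x y a] assms by auto
next
  case False then show ?thesis using Dop_diff[OF assms(1,2), of y x a] assms by auto
qed

lemma Dop_local:
  assumes "h \<ge> 0" "r \<in> {0..1}" "\<And>t. t \<in> {0..max (r-h) 0} \<Longrightarrow> v t = v' t"
  shows "Dop a h v r = Dop a h v' r"
proof -
  have "Wf h v s = Wf h v' s" if "s \<in> {0..r}" for s
    unfolding Wf_def
    by (rule integral_cong) (use that assms in auto)
  then show ?thesis unfolding Dop_def
    by (metis (no_types, lifting) integral_cong)
qed

end

context moloc
begin

lemma Dop_conv:
  fixes hs :: "nat \<Rightarrow> real" and vs :: "nat \<Rightarrow> real \<Rightarrow> real" and as :: "nat \<Rightarrow> real"
  assumes h: "h \<ge> 0" "\<And>j. hs j \<ge> 0"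
    and vc: "continuous_on {0..1} v" "\<And>j. continuous_on {0..1} (vs j)"
    and conv: "\<And>t. t\<in>{0..1} \<Longrightarrow> (\<lambda>j. vs j (max (t - hs j) 0)) \<longlonglongrightarrow> v (max (t - h) 0)"
    and as: "as \<longlonglongrightarrow> a" and r: "r \<in> {0..1}"
  shows "(\<lambda>j. Dop (as j) (hs j) (vs j) r) \<longlonglongrightarrow> Dop a h v r"
proof -
  have W: "(\<lambda>j. Wf (hs j) (vs j) s) \<longlonglongrightarrow> Wf h v s" if s: "s\<in>{0..1}" for s
    unfolding Wf_def
  proof (rule dominated_convergence(2)[where h="\<lambda>_. real N * M"])
    show "(\<lambda>t. real N * t^(N-1) * G (vs j (max (t - hs j) 0))) integrable_on {0..s}" for j
      by (rule cont_int[OF Wint_cont[OF h(2) vc(2)]]) (use s in auto)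
    show "(\<lambda>_. real N * M) integrable_on {0..s}" by (intro integrable_continuous_interval continuous_intros)
    show "norm (real N * x^(N-1) * G (vs j (max (x - hs j) 0))) \<le> real N * M" if "x \<in> {0..s}" for j x
    proof -
      have x: "0 \<le> x" "x \<le> 1" using that s by auto
      have "x^(N-1) \<le> 1" using x by (simp add: power_le_one)
      then have "M * (real N * x^(N-1)) \<le> M * (real N * 1)"
        using M0 by (intro mult_left_mono) auto
      then show ?thesis using Wint_le[OF x(1), of "vs j (max (x - hs j) 0)"] Wint_nonneg[OF x(1), of "vs j (max (x - hs j) 0)"]
        by (simp add: mult.commute)
    qed
    show "(\<lambda>j. real N * x^(N-1) * G (vs j (max (x - hs j) 0))) \<longlonglongrightarrow> real N * x^(N-1) * G (v (max (x - h) 0))"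
      if "x \<in> {0..s}" for x
      by (intro tendsto_mult_left isCont_tendsto_compose[OF Gcont] conv) (use that s in auto)
  qed
  have "(\<lambda>j. integral {0..r} (\<lambda>s. root N (Wf (hs j) (vs j) s))) \<longlonglongrightarrow> integral {0..r} (\<lambda>s. root N (Wf h v s))"
  proof (rule dominated_convergence(2)[where h="\<lambda>_. root N M"])
    show "(\<lambda>s. root N (Wf (hs j) (vs j) s)) integrable_on {0..r}" for j
      by (rule cont_int[OF R_cont[OF h(2) vc(2)]]) (use r in auto)
    show "(\<lambda>_. root N M) integrable_on {0..r}" by (intro integrable_continuous_interval continuous_intros)
    show "norm (root N (Wf (hs j) (vs j) x)) \<le> root N M" if "x \<in> {0..r}" for j x
      using R_bounds[OF h(2) vc(2), of x j] that r by auto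
    show "(\<lambda>j. root N (Wf (hs j) (vs j) x)) \<longlonglongrightarrow> root N (Wf h v x)" if "x \<in> {0..r}" for x
      by (intro tendsto_real_root W) (use that r in auto)
  qed
  then show ?thesis unfolding Dop_def by (intro tendsto_intros as)
qed

primrec it :: "real \<Rightarrow> real \<Rightarrow> nat \<Rightarrow> real \<Rightarrow> real" where
  "it a h 0 = (\<lambda>_. a)"
| "it a h (Suc k) = Dop a h (it a h k)"

lemma it_cont: "h \<ge> 0 \<Longrightarrow> continuous_on {0..1} (it a h k)"
  by (induction k) (auto intro: Dop_cont)

lemma it_stable:
  assumes "h > 0"
  shows "r \<in> {0..1} \<Longrightarrow> r \<le> real k * h \<Longrightarrow> it a h (Suc k) r = it a h k r"
proof (induction k arbitrary: r)
  case 0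
  then have "r = 0" by auto
  then show ?case by (simp add: Dop_0)
next
  case (Suc k)
  have "Dop a h (it a h (Suc k)) r = Dop a h (it a h k) r"
  proof (rule Dop_local)
    show "h \<ge> 0" using assms by simp
    show "r \<in> {0..1}" using Suc.prems by simp
    fix t assume t: "t \<in> {0..max (r - h) 0}"
    have "r - h \<le> real k * h" using Suc.prems by (simp add: algebra_simps)
    moreover have "0 \<le> real k * h" using assms by simp
    ultimately have "t \<le> real k * h" using t by auto
    moreover have "t \<in> {0..1}" using t Suc.prems assms by auto
    ultimately show "it a h (Suc k) t = it a h k t" using Suc.IH by blast
  qed
  then show ?case by simp
qed

lemma it_fix:
  assumes "h = 1 / (real n + 1)" "r \<in> {0..1}"
  shows "Dop a h (it a h (n+2)) r = it a h (n+2) r"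
proof -
  have hp: "h > 0" using assms by simp
  have "real (n+2) * h = 1 + h" using assms by (auto simp: field_simps)
  moreover have "r \<le> 1" using assms(2) by simp
  ultimately have "r \<le> real (n+2) * h" using hp by linarith
  then have "it a h (Suc (n+2)) r = it a h (n+2) r" using it_stable[OF hp assms(2)] by blast
  then show ?thesis by simp
qed

lemma it_conv:
  assumes "h \<ge> 0" "as \<longlonglongrightarrow> a"
  shows "r \<in> {0..1} \<Longrightarrow> (\<lambda>j. it (as j) h k r) \<longlonglongrightarrow> it a h k r"
proof (induction k arbitrary: r)
  case 0 then show ?case using assms by simp
next
  case (Suc k)
  show ?case unfolding it.simps
    by (rule Dop_conv[where hs="\<lambda>_. h"]) (use assms Suc in \<open>auto intro: it_cont\<close>)
qed

lemma fix_anti: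
  assumes "h \<ge> 0" "continuous_on {0..1} w" "\<And>r. r\<in>{0..1} \<Longrightarrow> w r = Dop a h w r"
    "0 \<le> x" "x \<le> y" "y \<le> 1"
  shows "w y \<le> w x"
  using Dop_diff(1)[OF assms(1,2,4,5,6), of a] assms(3)[of x] assms(3)[of y] assms(4-6) by auto

lemma fix_hi:
  assumes "h \<ge> 0" "continuous_on {0..1} w" "\<And>r. r\<in>{0..1} \<Longrightarrow> w r = Dop a h w r"
    "lam * root N M < a"
  shows "0 < w 1"
  using Dop_le(2)[OF assms(1,2), of 1 a] assms(3)[of 1] assms(4) by auto

lemma fix_lo:
  assumes h: "h \<ge> 0" and wc: "continuous_on {0..1} w" and fx: "\<And>r. r\<in>{0..1} \<Longrightarrow> w r = Dop \<alpha> h w r"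
    and c: "c > 0" and cG: "\<And>x. \<alpha>/2 < x \<Longrightarrow> x \<le> \<alpha> \<Longrightarrow> c \<le> G x"
    and big: "4 * \<alpha> \<le> lam * root N c"
  shows "w 1 \<le> 0"
proof -
  define R where "R = (\<lambda>s. root N (Wf h w s))"
  define I where "I = (\<lambda>r. integral {0..r} R)"
  have Rc: "continuous_on {0..1} R" unfolding R_def by (rule R_cont[OF h wc])
  have wI: "w r = \<alpha> - lam * I r" if "r \<in> {0..1}" for r
    using fx[OF that] by (simp add: Dop_def I_def R_def)
  have I0: "I 0 = 0" by (simp add: I_def)
  have Rmono: "R x \<le> R y" if "0 \<le> x" "x \<le> y" "y \<le> 1" for x y
    unfolding R_def using Wf_mono[OF h wc that] N1 by (simp add: real_root_le_iff)
  have Rnn: "0 \<le> R s" if "s \<in> {0..1}" for s unfolding R_def using R_bounds[OF h wc that] by simp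
  have Ihalf: "0 \<le> I (1/2)"
    using int_lower[OF Rc, of 0 "1/2" 0] Rnn I0 by (auto simp: I_def)
  show ?thesis
  proof (cases "w (1/2) > \<alpha>/2")
    case True
    have "c * (real N * t^(N-1)) \<le> real N * t^(N-1) * G (w (max (t-h) 0))" if t: "t \<in> {0..1/2}" for t
    proof -
      have m: "0 \<le> max (t-h) 0" "max (t-h) 0 \<le> t" using t h by auto
      have "w t \<le> w (max (t-h) 0)" by (rule fix_anti[OF h wc fx]) (use m t in auto)
      moreover have "w (1/2) \<le> w t" by (rule fix_anti[OF h wc fx]) (use t in auto)
      moreover have "w (max (t-h) 0) \<le> \<alpha>" using Dop_le(1)[OF h wc, of "max (t-h) 0" \<alpha>] fx[of "max (t-h) 0"] m t by auto
      ultimately have cg: "c \<le> G (w (max (t-h) 0))" using True cG by auto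
      have "0 \<le> real N * t^(N-1)" using t by simp
      from mult_right_mono[OF cg this] show ?thesis by (simp add: mult.commute)
    qed
    then have "integral {0..1/2} (\<lambda>t. c * (real N * t^(N-1))) \<le> Wf h w (1/2)"
      unfolding Wf_def
      by (intro integral_le cont_int[OF Wint_cont[OF h wc]]) (auto intro!: integrable_continuous_interval continuous_intros)
    moreover have "integral {0..1/2} (\<lambda>t. c * (real N * t^(N-1))) = c * integral {0..1/2} (\<lambda>t. real N * t^(N-1))"
      by (rule integral_mult_right)
    moreover have "integral {0..1/2} (\<lambda>t. real N * t^(N-1)) = (1/2)^N"
      by (rule int_pow_deriv) (use N1 in auto)
    ultimately have Wh: "c * (1/2)^N \<le> Wf h w (1/2)" by (simp only:)
    have "root N ((1/2)^N) = (1/2::real)" using N1 by (intro real_root_power_cancel) auto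
    then have "root N (c * (1/2)^N) = root N c * (1/2)"
      by (simp only: real_root_mult)
    moreover have "root N (c * (1/2)^N) \<le> root N (Wf h w (1/2))" using Wh N1 by simp
    ultimately have Rh: "root N c / 2 \<le> R (1/2)" unfolding R_def by simp
    have "(root N c / 2) * (1 - 1/2) \<le> I 1 - I (1/2)"
      unfolding I_def by (rule int_lower[OF Rc]) (use Rmono Rh in \<open>auto intro: order_trans\<close>)
    then have "root N c / 4 \<le> I 1" using Ihalf by simp
    then have "lam * (root N c / 4) \<le> lam * I 1" using lam by (intro mult_left_mono) auto
    then show ?thesis using wI[of 1] big by simp
  next
    case False
    have "I (1/2) - I 0 \<le> R (1/2) * (1/2 - 0)"
      unfolding I_def by (rule int_upper[OF Rc]) (use Rmono in auto)
    then have u: "I (1/2) \<le> R (1/2) / 2" using I0 by simp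
    have l: "R (1/2) * (1 - 1/2) \<le> I 1 - I (1/2)"
      unfolding I_def by (rule int_lower[OF Rc]) (use Rmono in auto)
    have "\<alpha> / 2 \<le> lam * I (1/2)" using False wI[of "1/2"] by simp
    also have "\<dots> \<le> lam * (R (1/2) / 2)" using u lam by (intro mult_left_mono) auto
    finally have a1: "\<alpha> / 2 \<le> lam * (R (1/2) / 2)" .
    have "lam * (R (1/2) / 2) \<le> lam * (I 1 - I (1/2))" using l lam by (intro mult_left_mono) auto
    then show ?thesis using a1 wI[of 1] wI[of "1/2"] False by (simp add: algebra_simps)
  qed
qed

end

lemma AA:
  fixes w :: "nat \<Rightarrow> real \<Rightarrow> real" and a :: "nat \<Rightarrow> real"
  assumes bw: "\<And>n t. t \<in> {0..1} \<Longrightarrow> \<bar>w n t\<bar> \<le> B"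
    and lw: "\<And>n x y. x \<in> {0..1} \<Longrightarrow> y \<in> {0..1} \<Longrightarrow> \<bar>w n x - w n y\<bar> \<le> L * \<bar>x - y\<bar>"
    and L: "L \<ge> 0"
    and ba: "\<And>n. a n \<in> {lo..hi}"
  obtains \<sigma> a0 where "strict_mono \<sigma>" "(\<lambda>k. a (\<sigma> k)) \<longlonglongrightarrow> a0" "a0 \<in> {lo..hi}"
    "\<And>t. t \<in> {0..1} \<Longrightarrow> convergent (\<lambda>k. w (\<sigma> k) t)"
proof -
  obtain a0 \<sigma>1 where a0: "a0 \<in> {lo..hi}" "strict_mono \<sigma>1" "(a \<circ> \<sigma>1) \<longlonglongrightarrow> a0"
    using seq_compactE[OF compact_imp_seq_compact[OF compact_Icc], of a lo hi] ba by blast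
  define q :: "nat \<Rightarrow> real" where "q n = (case prod_decode n of (j, m) \<Rightarrow> min 1 (real j / real (Suc m)))" for n
  have q01: "q n \<in> {0..1}" for n by (auto simp: q_def split: prod.split)
  have qdense: "\<exists>n. \<bar>q n - t\<bar> \<le> 1 / real (Suc m)" if t: "t \<in> {0..1}" for t m
  proof -
    define j where "j = nat \<lfloor>t * real (Suc m)\<rfloor>"
    have "real j = of_int \<lfloor>t * real (Suc m)\<rfloor>" using t by (simp add: j_def)
    then have j1: "real j \<le> t * real (Suc m)" "t * real (Suc m) < real j + 1"
      by linarith+
    have sp: "real (Suc m) > 0" by simp
    have d1: "real j / real (Suc m) \<le> t" using j1(1) sp by (simp add: divide_le_eq)
    have "(t * real (Suc m) - real j) / real (Suc m) < 1 / real (Suc m)"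
      using j1(2) sp by (intro divide_strict_right_mono) auto
    moreover have "t - real j / real (Suc m) = (t * real (Suc m) - real j) / real (Suc m)"
      using sp by (simp add: diff_divide_distrib)
    ultimately have d2: "t - real j / real (Suc m) < 1 / real (Suc m)" by simp
    have "real j / real (Suc m) \<le> 1" using d1 t by (meson atLeastAtMost_iff order_trans)
    then have "q (prod_encode (j, m)) = real j / real (Suc m)" by (simp add: q_def)
    then show ?thesis using d1 d2 by (intro exI[of _ "prod_encode (j, m)"]) simp
  qed
  interpret S: subseqs "\<lambda>n s. convergent (\<lambda>k. w (\<sigma>1 (s k)) (q n))"
  proof
    fix n and s :: "nat \<Rightarrow> nat" assume "strict_mono s"
    have "\<forall>k. w (\<sigma>1 (s k)) (q n) \<in> {-B..B}"
    proof
      fix k show "w (\<sigma>1 (s k)) (q n) \<in> {-B..B}" using bw[OF q01[of n], of "\<sigma>1 (s k)"] by auto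
    qed
    then obtain l r where "l\<in>{-B..B}" "strict_mono r" "((\<lambda>k. w (\<sigma>1 (s k)) (q n)) \<circ> r) \<longlonglongrightarrow> l"
      using seq_compactE[OF compact_imp_seq_compact[OF compact_Icc[of "-B" B]], of "\<lambda>k. w (\<sigma>1 (s k)) (q n)"] by blast
    then show "\<exists>r'. strict_mono r' \<and> convergent (\<lambda>k. w (\<sigma>1 ((s \<circ> r') k)) (q n))"
      by (auto simp: convergent_def o_def)
  qed
  define \<sigma> where "\<sigma> = \<sigma>1 \<circ> S.diagseq"
  have sm: "strict_mono \<sigma>" unfolding \<sigma>_def using a0(2) S.subseq_diagseq by (rule strict_mono_o)
  have cq: "convergent (\<lambda>k. w (\<sigma> k) (q n))" for n
  proof -
    have "convergent (\<lambda>k. w (\<sigma>1 ((S.diagseq \<circ> (+) (Suc n)) k)) (q n))"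
    proof (rule S.diagseq_holds)
      fix r s n assume "strict_mono (r::nat\<Rightarrow>nat)" "convergent (\<lambda>k. w (\<sigma>1 (s k)) (q n))"
      from convergent_subseq_convergent[OF this(2) this(1)]
      show "convergent (\<lambda>k. w (\<sigma>1 ((s \<circ> r) k)) (q n))" by (simp add: o_def)
    qed
    then have "convergent (\<lambda>k. w (\<sigma> (k + Suc n)) (q n))" by (simp add: \<sigma>_def o_def add.commute)
    then show ?thesis using convergent_ignore_initial_segment[of "\<lambda>k. w (\<sigma> k) (q n)" "Suc n"] by simp
  qed
  have cv: "convergent (\<lambda>k. w (\<sigma> k) t)" if t: "t \<in> {0..1}" for t
  proof -
    have "Cauchy (\<lambda>k. w (\<sigma> k) t)"
    proof (rule CauchyI)
      fix e :: real assume e: "0 < e"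
      obtain m0 where m0: "4 * L / e < real m0" using reals_Archimedean2 by blast
      define m where "m = m0"
      have "4 * L / e < real (Suc m)" using m0 by (simp add: m_def)
      then have Lm: "L / real (Suc m) < e/4" using e by (simp add: field_simps)
      obtain n where qn: "\<bar>q n - t\<bar> \<le> 1/real (Suc m)" using qdense[OF t] by blast
      have "Cauchy (\<lambda>k. w (\<sigma> k) (q n))" using cq Cauchy_convergent_iff by blast
      then obtain K where K: "\<And>i j. i \<ge> K \<Longrightarrow> j \<ge> K \<Longrightarrow> norm (w (\<sigma> i) (q n) - w (\<sigma> j) (q n)) < e/2"
        using CauchyD[of _ "e/2"] e by (metis half_gt_zero)
      have lq: "\<bar>w p t - w p (q n)\<bar> \<le> L / real (Suc m)" for p
      proof -
        have "\<bar>w p t - w p (q n)\<bar> \<le> L * \<bar>t - q n\<bar>" using lw[OF t q01[of n]] .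
        also have "\<dots> \<le> L * (1 / real (Suc m))" using qn L by (intro mult_left_mono) auto
        finally show ?thesis by simp
      qed
      show "\<exists>K. \<forall>i\<ge>K. \<forall>j\<ge>K. norm (w (\<sigma> i) t - w (\<sigma> j) t) < e"
      proof (intro exI allI impI)
        fix i j assume ij: "K \<le> i" "K \<le> j"
        have 3: "\<bar>w (\<sigma> i) (q n) - w (\<sigma> j) (q n)\<bar> < e/2" using K[OF ij] by simp
        show "norm (w (\<sigma> i) t - w (\<sigma> j) t) < e"
          using lq[of "\<sigma> i"] lq[of "\<sigma> j"] 3 Lm unfolding real_norm_def by linarith
      qed
    qed
    then show ?thesis by (simp add: Cauchy_convergent_iff)
  qed
  have "(\<lambda>k. a (\<sigma> k)) \<longlonglongrightarrow> a0"
    using LIMSEQ_subseq_LIMSEQ[OF a0(3) S.subseq_diagseq] by (simp add: \<sigma>_def o_def)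
  then show ?thesis using that sm a0(1) cv by blast
qed

lemma lip_cont:
  fixes u :: "real \<Rightarrow> real"
  assumes "\<And>x y. x \<in> {0..1} \<Longrightarrow> y \<in> {0..1} \<Longrightarrow> \<bar>u x - u y\<bar> \<le> L * \<bar>x - y\<bar>" "L \<ge> 0"
  shows "continuous_on {0..1} u"
  by (rule lipschitz_on_continuous_on[of L]) (rule lipschitz_onI, use assms in \<open>auto simp: dist_real_def\<close>)

context moloc
begin

lemma exists_limit:
  assumes al: "0 < \<alpha>" "\<alpha> \<le> A" and hiA: "lam * root N M < A"
    and c: "c > 0" "\<And>x. \<alpha>/2 < x \<Longrightarrow> x \<le> \<alpha> \<Longrightarrow> c \<le> G x" "4*\<alpha> \<le> lam * root N c"
  obtains a u where "a \<in> {\<alpha>..A}" "continuous_on {0..1} u" "\<And>r. r\<in>{0..1} \<Longrightarrow> u r = Dop a 0 u r" "u 1 = 0"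
proof -
  define h :: "nat \<Rightarrow> real" where "h n = 1 / (real n + 1)" for n
  have hp: "h n > 0" for n by (simp add: h_def)
  define S where "S n a = it a (h n) (n+2) 1" for n a
  have fixn: "it a (h n) (n+2) r = Dop a (h n) (it a (h n) (n+2)) r" if "r \<in> {0..1}" for a n r
    using it_fix[of "h n" n r a] that by (simp add: h_def)
  have itc: "continuous_on {0..1} (it a (h n) k)" for a n k using it_cont hp less_imp_le by blast
  have ex: "\<exists>a\<in>{\<alpha>..A}. S n a = 0" for n
  proof -
    have "continuous_on {\<alpha>..A} (S n)"
    proof (rule continuous_on_sequentiallyI)
      fix xs a assume "\<forall>j. xs j \<in> {\<alpha>..A}" "a \<in> {\<alpha>..A}" "xs \<longlonglongrightarrow> a"
      then show "(\<lambda>j. S n (xs j)) \<longlonglongrightarrow> S n a"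
        unfolding S_def by (intro it_conv) (use hp less_imp_le in auto)
    qed
    moreover have "S n \<alpha> \<le> 0" unfolding S_def
      by (rule fix_lo[OF less_imp_le[OF hp] itc fixn c]) auto
    moreover have "0 \<le> S n A" unfolding S_def
      using fix_hi[OF less_imp_le[OF hp] itc fixn hiA] by (meson less_imp_le)
    ultimately show ?thesis using IVT'[of "S n" \<alpha> 0 A] al by auto
  qed
  then obtain an where an: "\<And>n. an n \<in> {\<alpha>..A}" "\<And>n. S n (an n) = 0" by metis
  define w where "w n = it (an n) (h n) (n+2)" for n
  define L where "L = lam * root N M"
  have L0: "L \<ge> 0" unfolding L_def using lam M0 by (intro mult_nonneg_nonneg real_root_ge_zero) auto
  have wc: "continuous_on {0..1} (w n)" for n unfolding w_def by (rule itc)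
  have wfix: "w n r = Dop (an n) (h n) (w n) r" if "r \<in> {0..1}" for n r unfolding w_def by (rule fixn[OF that])
  have wlip: "\<bar>w n x - w n y\<bar> \<le> L * \<bar>x - y\<bar>" if "x \<in> {0..1}" "y \<in> {0..1}" for n x y
  proof -
    have "\<bar>Dop (an n) (h n) (w n) x - Dop (an n) (h n) (w n) y\<bar> \<le> lam * root N M * \<bar>x - y\<bar>"
      by (rule Dop_lip[OF less_imp_le[OF hp[of n]] wc[of n] that])
    moreover have "w n x = Dop (an n) (h n) (w n) x" "w n y = Dop (an n) (h n) (w n) y"
      using wfix that by blast+
    ultimately show ?thesis unfolding L_def by metis
  qed
  have wb: "\<bar>w n t\<bar> \<le> A + L" if "t \<in> {0..1}" for n t
  proof -
    note dl = Dop_le[OF less_imp_le[OF hp[of n]] wc[of n] that, of "an n"]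
    have e: "w n t = Dop (an n) (h n) (w n) t" using wfix that by blast
    have 1: "w n t \<le> an n" using dl(1) e by simp
    have 2: "an n - L \<le> w n t" using dl(2) e by (simp add: L_def)
    have 3: "an n \<le> A" "\<alpha> \<le> an n" using an(1)[of n] by auto
    have "w n t \<le> A + L" using 1 3 L0 by linarith
    moreover have "- (A + L) \<le> w n t" using 2 3 al L0 by linarith
    ultimately show ?thesis by (simp add: abs_le_iff)
  qed
  obtain \<sigma> a0 where sg: "strict_mono \<sigma>" "(\<lambda>k. an (\<sigma> k)) \<longlonglongrightarrow> a0" "a0 \<in> {\<alpha>..A}"
    "\<And>t. t \<in> {0..1} \<Longrightarrow> convergent (\<lambda>k. w (\<sigma> k) t)"
    using AA[where w=w and a=an and B="A+L" and L=L and lo=\<alpha> and hi=A, OF wb wlip L0 an(1)] by blast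
  define u where "u t = lim (\<lambda>k. w (\<sigma> k) t)" for t
  have uc: "(\<lambda>k. w (\<sigma> k) t) \<longlonglongrightarrow> u t" if "t \<in> {0..1}" for t
    using sg(4)[OF that] by (simp add: u_def convergent_LIMSEQ_iff)
  have ulip: "\<bar>u x - u y\<bar> \<le> L * \<bar>x - y\<bar>" if "x \<in> {0..1}" "y \<in> {0..1}" for x y
  proof (rule LIMSEQ_le_const2)
    show "(\<lambda>k. \<bar>w (\<sigma> k) x - w (\<sigma> k) y\<bar>) \<longlonglongrightarrow> \<bar>u x - u y\<bar>"
      by (intro tendsto_intros uc that)
    show "\<exists>N. \<forall>n\<ge>N. \<bar>w (\<sigma> n) x - w (\<sigma> n) y\<bar> \<le> L * \<bar>x - y\<bar>" using wlip[OF that] by blast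
  qed
  have ucont: "continuous_on {0..1} u" by (rule lip_cont[OF ulip L0])
  have h0: "(\<lambda>k. h (\<sigma> k)) \<longlonglongrightarrow> 0"
  proof -
    have "h = (\<lambda>n. inverse (real (Suc n)))" by (rule ext) (simp add: h_def inverse_eq_divide add.commute)
    then have "h \<longlonglongrightarrow> 0" using LIMSEQ_inverse_real_of_nat by simp
    from LIMSEQ_subseq_LIMSEQ[OF this sg(1)] show ?thesis by (simp add: o_def)
  qed
  have ufix: "u r = Dop a0 0 u r" if r: "r \<in> {0..1}" for r
  proof -
    have "(\<lambda>k. Dop (an (\<sigma> k)) (h (\<sigma> k)) (w (\<sigma> k)) r) \<longlonglongrightarrow> Dop a0 0 u r"
    proof (rule Dop_conv)
      show "0 \<le> (0::real)" by simp
      show "0 \<le> h (\<sigma> j)" for j using hp less_imp_le by blast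
      show "continuous_on {0..1} u" by (rule ucont)
      show "continuous_on {0..1} (w (\<sigma> j))" for j by (rule wc)
      show "(\<lambda>k. an (\<sigma> k)) \<longlonglongrightarrow> a0" by (rule sg(2))
      show "r \<in> {0..1}" by (rule r)
      fix t :: real assume t: "t \<in> {0..1}"
      have "(\<lambda>k. w (\<sigma> k) (max (t - h (\<sigma> k)) 0) - w (\<sigma> k) t) \<longlonglongrightarrow> 0"
      proof (rule Lim_null_comparison)
        show "\<forall>\<^sub>F k in sequentially. norm (w (\<sigma> k) (max (t - h (\<sigma> k)) 0) - w (\<sigma> k) t) \<le> L * h (\<sigma> k)"
        proof (rule always_eventually, rule allI)
          fix k
          have m: "max (t - h (\<sigma> k)) 0 \<in> {0..1}" "\<bar>max (t - h (\<sigma> k)) 0 - t\<bar> \<le> h (\<sigma> k)"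
            using t hp[of "\<sigma> k"] by auto
          have "\<bar>w (\<sigma> k) (max (t - h (\<sigma> k)) 0) - w (\<sigma> k) t\<bar> \<le> L * \<bar>max (t - h (\<sigma> k)) 0 - t\<bar>"
            by (rule wlip[OF m(1) t])
          also have "\<dots> \<le> L * h (\<sigma> k)" using m(2) L0 by (intro mult_left_mono) auto
          finally show "norm (w (\<sigma> k) (max (t - h (\<sigma> k)) 0) - w (\<sigma> k) t) \<le> L * h (\<sigma> k)" by simp
        qed
        show "(\<lambda>k. L * h (\<sigma> k)) \<longlonglongrightarrow> 0" using tendsto_mult_left[OF h0, of L] by simp
      qed
      from tendsto_add[OF this uc[OF t]]
      show "(\<lambda>k. w (\<sigma> k) (max (t - h (\<sigma> k)) 0)) \<longlonglongrightarrow> u (max (t - 0) 0)" using t by simp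
    qed
    moreover have "(\<lambda>k. Dop (an (\<sigma> k)) (h (\<sigma> k)) (w (\<sigma> k)) r) = (\<lambda>k. w (\<sigma> k) r)"
      using wfix[OF r] by simp
    ultimately show ?thesis using uc[OF r] LIMSEQ_unique by metis
  qed
  have w1: "w n 1 = 0" for n using an(2)[of n] by (simp add: S_def w_def)
  have "(\<lambda>k. w (\<sigma> k) 1) \<longlonglongrightarrow> 0" by (simp add: w1)
  moreover have "(\<lambda>k. w (\<sigma> k) 1) \<longlonglongrightarrow> u 1" by (rule uc) simp
  ultimately have "u 1 = 0" using LIMSEQ_unique by metis
  then show ?thesis using that sg(3) ucont ufix by blast
qed

end

lemma hfd_transform:
  "x \<in> S \<Longrightarrow> (\<And>y. y \<in> S \<Longrightarrow> g y = f y) \<Longrightarrow> (f has_field_derivative D) (at x within S)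
   \<Longrightarrow> (g has_field_derivative D) (at x within S)"
  unfolding has_field_derivative_def by (rule has_derivative_transform)

lemma concave_core:
  fixes u u' :: "real \<Rightarrow> real"
  assumes d: "\<And>x. x\<in>{0<..<1} \<Longrightarrow> (u has_real_derivative u' x) (at x)"
    and m: "\<And>x y. 0<x \<Longrightarrow> x<y \<Longrightarrow> y<1 \<Longrightarrow> u' y < u' x"
    and xy: "0 < x" "x < y" "y < 1" and t: "0 < t" "t < 1"
  shows "(1 - t) * u x + t * u y < u ((1 - t) * x + t * y)"
proof -
  define z where "z = (1 - t) * x + t * y"
  have zx1: "z - x = t * (y - x)" unfolding z_def by (simp add: algebra_simps)
  have zx2: "y - z = (1 - t) * (y - x)" unfolding z_def by (simp add: algebra_simps)
  note zx = zx1 zx2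
  have p1: "0 < t * (y - x)" using t xy by simp
  have p2: "0 < (1 - t) * (y - x)" using t xy by simp
  have z1a: "x < z" using zx1 p1 by linarith
  have z1b: "z < y" using zx2 p2 by linarith
  note z1 = z1a z1b
  have der: "DERIV u s :> u' s" if "x \<le> s" "s \<le> y" for s using d xy that by auto
  obtain \<xi>1 where \<xi>1: "x < \<xi>1" "\<xi>1 < z" "u z - u x = (z - x) * u' \<xi>1"
    using MVT2[OF z1(1), of u u'] der z1 by (metis order.trans less_imp_le)
  obtain \<xi>2 where \<xi>2: "z < \<xi>2" "\<xi>2 < y" "u y - u z = (y - z) * u' \<xi>2"
    using MVT2[OF z1(2), of u u'] der z1 by (metis order.trans less_imp_le)
  have lt: "u' \<xi>2 < u' \<xi>1" using m[of \<xi>1 \<xi>2] \<xi>1 \<xi>2 xy by linarith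
  have e1: "u x = u z - t * (y - x) * u' \<xi>1" using \<xi>1(3) zx(1) by simp
  have e2: "u y = u z + (1 - t) * (y - x) * u' \<xi>2" using \<xi>2(3) zx(2) by simp
  have "(1 - t) * u x + t * u y - u z = t * (1 - t) * (y - x) * (u' \<xi>2 - u' \<xi>1)"
    unfolding e1 e2 by (simp add: algebra_simps)
  moreover have "0 < t * (1 - t) * (y - x) * (u' \<xi>1 - u' \<xi>2)"
    using t xy lt by (intro mult_pos_pos) auto
  moreover have "t * (1 - t) * (y - x) * (u' \<xi>2 - u' \<xi>1) = - (t * (1 - t) * (y - x) * (u' \<xi>1 - u' \<xi>2))"
    by (simp add: algebra_simps)
  ultimately have "(1 - t) * u x + t * u y < u z" by linarith
  then show ?thesis unfolding z_def .
qed

lemma concave_from_deriv: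
  fixes u u' :: "real \<Rightarrow> real"
  assumes d: "\<And>x. x\<in>{0<..<1} \<Longrightarrow> (u has_real_derivative u' x) (at x)"
    and m: "\<And>x y. 0<x \<Longrightarrow> x<y \<Longrightarrow> y<1 \<Longrightarrow> u' y < u' x"
  shows "strictly_concave_on {0<..<1} u"
  unfolding strictly_concave_on_def strictly_convex_on_def
proof (intro conjI ballI allI impI)
  show "convex {0<..<1::real}" by (rule convex_real_interval)
  fix x y t :: real assume x: "x \<in> {0<..<1}" and y: "y \<in> {0<..<1}" and h: "x \<noteq> y \<and> 0 < t \<and> t < 1"
  show "- u ((1 - t) * x + t * y) < (1 - t) * - u x + t * - u y"
  proof (cases "x < y")
    case True
    have "(1 - t) * u x + t * u y < u ((1 - t) * x + t * y)" using concave_core[OF d m, of x y t] x y h True by auto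
    then show ?thesis by linarith
  next
    case False
    then have "y < x" using h by auto
    then have "(1 - (1-t)) * u y + (1-t) * u x < u ((1 - (1-t)) * y + (1-t) * x)"
      using concave_core[OF d m, of y x "1-t"] x y h by auto
    moreover have e: "(1 - (1-t)) * y + (1-t) * x = (1 - t) * x + t * y" by simp
    ultimately have "t * u y + (1-t) * u x < u ((1 - t) * x + t * y)" by (simp add: add.commute)
    then show ?thesis by linarith
  qed
qed

lemma int_cpow: "0 \<le> y \<Longrightarrow> N \<ge> 1 \<Longrightarrow> integral {0..y} (\<lambda>t. c * (real N * t^(N-1))) = c * y^N"
  using int_pow_deriv[of y N] by (simp only: integral_mult_right)

locale regloc =
  fixes N :: nat and lam a :: real and g u :: "real \<Rightarrow> real"
  assumes N1: "N \<ge> 1" and lam: "lam > 0" and a: "a > 0"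
    and gc: "\<And>x. isCont g x" and gpos: "\<And>x. x > 0 \<Longrightarrow> g x > 0" and g0: "\<And>x. x \<ge> 0 \<Longrightarrow> g x \<ge> 0"
    and uc: "continuous_on {0..1} u"
    and ufix: "\<And>r. r \<in> {0..1} \<Longrightarrow> u r = a - lam * integral {0..r} (\<lambda>s. root N (integral {0..s} (\<lambda>t. real N * t^(N-1) * g (u t))))"
    and u1: "u 1 = 0" and ung: "\<And>t. t\<in>{0..1} \<Longrightarrow> 0 \<le> u t"

context regloc
begin

definition "FF t = real N * t^(N-1) * g (u t)"
definition "WW s = integral {0..s} FF"
definition "RR s = root N (WW s)"
definition "QQ s = (if s = 0 then g a else WW s / s^N)"
definition "D1 s = - lam * RR s"
definition "D2 s = - lam * g (u s) / (root N (QQ s))^(N-1)"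

lemma u0: "u 0 = a" using ufix[of 0] by simp

lemma gcu: "continuous_on {0..1} (\<lambda>t. g (u t))"
  using continuous_on_compose2[OF continuous_at_imp_continuous_on[of UNIV g] uc] gc by auto

lemma FFc: "continuous_on {0..1} FF"
  unfolding FF_def by (intro continuous_intros gcu)

lemma FFnn: "t \<in> {0..1} \<Longrightarrow> 0 \<le> FF t"
  unfolding FF_def using g0[OF ung] by simp

lemma WWc: "continuous_on {0..1} WW" unfolding WW_def by (rule int_cont[OF FFc])

lemma WWd: "x \<in> {0..1} \<Longrightarrow> (WW has_real_derivative FF x) (at x within {0..1})"
  unfolding WW_def by (rule integral_has_real_derivative[OF FFc])

lemma WWnn: "s \<in> {0..1} \<Longrightarrow> 0 \<le> WW s"
  unfolding WW_def by (rule integral_nonneg[OF cont_int[OF FFc]]) (auto intro: FFnn)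

lemma WWmono: "0 \<le> x \<Longrightarrow> x \<le> y \<Longrightarrow> y \<le> 1 \<Longrightarrow> WW x \<le> WW y"
  unfolding WW_def by (rule int_mono0[OF FFc]) (auto intro: FFnn)

lemma Wapprox:
  assumes e: "e > 0"
  shows "\<exists>d>0. \<forall>y. 0 < y \<and> y < d \<and> y \<le> 1 \<longrightarrow> \<bar>WW y - g a * y^N\<bar> \<le> e * y^N"
proof -
  have "continuous (at 0 within {0..1}) (\<lambda>t. g (u t))"
    using gcu by (simp add: continuous_on_eq_continuous_within)
  then obtain d where d: "d > 0" "\<And>t. t \<in> {0..1} \<Longrightarrow> dist t 0 < d \<Longrightarrow> dist (g (u t)) (g (u 0)) < e"
    using e unfolding continuous_within_eps_delta by blast
  have "\<bar>WW y - g a * y^N\<bar> \<le> e * y^N" if y: "0 < y" "y < d" "y \<le> 1" for y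
  proof -
    have close: "\<bar>g (u t) - g a\<bar> < e" if "t \<in> {0..y}" for t
      using d(2)[of t] that y u0 by (auto simp: dist_real_def)
    have pn: "0 \<le> real N * t^(N-1)" if "t \<in> {0..y}" for t using that by simp
    have lo: "(g a - e) * (real N * t^(N-1)) \<le> FF t" if "t \<in> {0..y}" for t
    proof -
      have "g a - e \<le> g (u t)" using close[OF that] by linarith
      from mult_right_mono[OF this pn[OF that]] show ?thesis by (simp add: FF_def mult.commute)
    qed
    have hi: "FF t \<le> (g a + e) * (real N * t^(N-1))" if "t \<in> {0..y}" for t
    proof -
      have "g (u t) \<le> g a + e" using close[OF that] by linarith
      from mult_right_mono[OF this pn[OF that]] show ?thesis by (simp add: FF_def mult.commute)
    qed
    have int1: "FF integrable_on {0..y}" by (rule cont_int[OF FFc]) (use y in auto)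
    have int2: "(\<lambda>t. c * (real N * t^(N-1))) integrable_on {0..y}" for c
      by (intro integrable_continuous_interval continuous_intros)
    have i1: "integral {0..y} (\<lambda>t. (g a - e) * (real N * t^(N-1))) \<le> WW y"
      unfolding WW_def by (rule integral_le[OF int2 int1 lo])
    have i2: "integral {0..y} (\<lambda>t. (g a - e) * (real N * t^(N-1))) = (g a - e) * y^N"
      by (rule int_cpow) (use y N1 in auto)
    have i3: "WW y \<le> integral {0..y} (\<lambda>t. (g a + e) * (real N * t^(N-1)))"
      unfolding WW_def by (rule integral_le[OF int1 int2 hi])
    have i4: "integral {0..y} (\<lambda>t. (g a + e) * (real N * t^(N-1))) = (g a + e) * y^N"
      by (rule int_cpow) (use y N1 in auto)
    have "(g a - e) * y^N \<le> WW y" using i1 i2 by linarith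
    moreover have "WW y \<le> (g a + e) * y^N" using i3 i4 by linarith
    ultimately show ?thesis by (simp add: abs_le_iff algebra_simps)
  qed
  then show ?thesis using d(1) by blast
qed

lemma Wlim: "((\<lambda>y. WW y / y^N) \<longlongrightarrow> g a) (at 0 within {0..1})"
  unfolding tendsto_iff eventually_at
proof (intro allI impI)
  fix e :: real assume e: "e > 0"
  obtain d where d: "d > 0" "\<And>y::real. 0 < y \<Longrightarrow> y < d \<Longrightarrow> y \<le> 1 \<Longrightarrow> \<bar>WW y - g a * y^N\<bar> \<le> (e/2) * y^N"
    using Wapprox[of "e/2"] e by auto
  show "\<exists>d>0. \<forall>x\<in>{0..1}. x \<noteq> 0 \<and> dist x 0 < d \<longrightarrow> dist (WW x / x ^ N) (g a) < e"
  proof (intro exI[of _ d] conjI ballI impI)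
    show "d > 0" by (rule d(1))
    fix y :: real assume y: "y \<in> {0..1}" "y \<noteq> 0 \<and> dist y 0 < d"
    then have yp: "0 < y" "y < d" "y \<le> 1" by auto
    have pN: "0 < y^N" using yp by simp
    have "WW y / y^N - g a = (WW y - g a * y^N) / y^N" using pN yp by (simp add: diff_divide_distrib)
    then have "\<bar>WW y / y^N - g a\<bar> = \<bar>WW y - g a * y^N\<bar> / y^N" using pN by simp
    also have "\<dots> \<le> (e/2) * y^N / y^N" using d(2)[OF yp] pN by (intro divide_right_mono) auto
    also have "\<dots> = e/2" using pN yp by simp
    finally show "dist (WW y / y ^ N) (g a) < e" using e by (simp add: dist_real_def)
  qed
qed

lemma Wpos: "0 < s \<Longrightarrow> s \<le> 1 \<Longrightarrow> 0 < WW s"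
proof -
  assume s: "0 < s" "s \<le> 1"
  have ga: "g a > 0" using gpos a by simp
  obtain d where d: "d > 0" "\<And>y::real. 0 < y \<Longrightarrow> y < d \<Longrightarrow> y \<le> 1 \<Longrightarrow> \<bar>WW y - g a * y^N\<bar> \<le> (g a / 2) * y^N"
    using Wapprox[of "g a / 2"] ga by auto
  define y where "y = min s (d/2)"
  have yp: "0 < y" "y < d" "y \<le> 1" "y \<le> s" using s d by (auto simp: y_def)
  have "0 < (g a / 2) * y^N" using ga yp by simp
  also have "(g a / 2) * y^N \<le> WW y" using d(2)[OF yp(1-3)] unfolding abs_le_iff by linarith
  also have "WW y \<le> WW s" using WWmono[of y s] yp s by simp
  finally show ?thesis .
qed

lemma QQpos: "s \<in> {0..1} \<Longrightarrow> 0 < QQ s"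
  using Wpos[of s] gpos[OF a] by (auto simp: QQ_def)

lemma QQc: "continuous_on {0..1} QQ"
  unfolding continuous_on_eq_continuous_within
proof
  fix x :: real assume x: "x \<in> {0..1}"
  show "continuous (at x within {0..1}) QQ"
    unfolding continuous_within
  proof (cases "x = 0")
    case True
    have "\<forall>\<^sub>F y in at 0 within {0..1}. WW y / y^N = QQ y"
      unfolding eventually_at_filter by (auto simp: QQ_def)
    from Lim_transform_eventually[OF Wlim this] show "(QQ \<longlongrightarrow> QQ x) (at x within {0..1})"
      using True by (simp add: QQ_def[of 0])
  next
    case False
    then have xp: "x > 0" using x by auto
    have "(WW \<longlongrightarrow> WW x) (at x within {0..1})"
      using WWc x by (simp add: continuous_on_eq_continuous_within continuous_within)
    then have "((\<lambda>y. WW y / y^N) \<longlongrightarrow> WW x / x^N) (at x within {0..1})"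
      using xp by (intro tendsto_intros) auto
    moreover have "\<forall>\<^sub>F y in at x within {0..1}. WW y / y^N = QQ y"
      unfolding eventually_at
      by (rule exI[of _ x]) (auto simp: QQ_def xp dist_real_def)
    ultimately show "(QQ \<longlongrightarrow> QQ x) (at x within {0..1})"
      using Lim_transform_eventually xp by (fastforce simp: QQ_def)
  qed
qed

end

context regloc
begin

lemma N0: "0 < N" using N1 by simp

lemma RRc: "continuous_on {0..1} RR"
  unfolding RR_def[abs_def] by (intro continuous_on_real_root WWc)

lemma RRpos: "0 < s \<Longrightarrow> s \<le> 1 \<Longrightarrow> 0 < RR s"
  unfolding RR_def using Wpos N0 by (simp add: real_root_gt_zero)

lemma RR0: "RR 0 = 0" by (simp add: RR_def WW_def)

lemma D1_0: "D1 0 = 0" by (simp add: D1_def RR0)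

lemma ufor: "r \<in> {0..1} \<Longrightarrow> u r = a - lam * integral {0..r} RR"
proof -
  assume r: "r \<in> {0..1}"
  have "(\<lambda>s. root N (integral {0..s} (\<lambda>t. real N * t^(N-1) * g (u t)))) = RR"
    by (rule ext) (simp add: RR_def WW_def FF_def[abs_def])
  then show ?thesis using ufix[OF r] by simp
qed

lemma ud: "x \<in> {0..1} \<Longrightarrow> (u has_real_derivative D1 x) (at x within {0..1})"
proof -
  assume x: "x \<in> {0..1}"
  have der: "((\<lambda>r. a - lam * integral {0..r} RR) has_real_derivative (0 - lam * RR x)) (at x within {0..1})"
    by (intro DERIV_diff DERIV_const DERIV_cmult integral_has_real_derivative RRc x)
  have "\<And>y. y \<in> {0..1} \<Longrightarrow> dist y x < 1 \<Longrightarrow> (\<lambda>r. a - lam * integral {0..r} RR) y = u y"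
    using ufor by simp
  then have "(u has_real_derivative (0 - lam * RR x)) (at x within {0..1})"
    by (rule has_field_derivative_transform_within[OF der zero_less_one x])
  then show ?thesis by (simp add: D1_def)
qed

lemma ud_at: "z \<in> {0<..<1} \<Longrightarrow> (u has_real_derivative D1 z) (at z)"
  using ud[of z] by (auto simp: at_within_Icc_at)

lemma rootQQ: "0 < x \<Longrightarrow> root N (QQ x) = RR x / x"
proof -
  assume x: "0 < x"
  have "root N (x^N) = x" using N0 x by (simp add: real_root_power_cancel)
  then show ?thesis using x by (simp add: QQ_def RR_def real_root_divide)
qed

lemma D2_0: "D2 0 = - lam * root N (g a)"
proof -
  define r where "r = root N (g a)"
  have ga: "g a > 0" using gpos a by simp
  have rp: "r > 0" unfolding r_def using ga N0 by (simp add: real_root_gt_zero)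
  have e1: "r ^ N = g a" unfolding r_def using ga N0 by simp
  obtain k where k: "N = Suc k" using N0 not0_implies_Suc by blast
  have e3: "g a = r * r ^ (N-1)" using e1 by (simp add: k)
  have "r ^ (N-1) > 0" using rp by simp
  then have "g a / r^(N-1) = r" unfolding e3 by simp
  moreover have "D2 0 = - lam * (g a / r^(N-1))" by (simp add: D2_def QQ_def u0 r_def)
  ultimately show ?thesis by (simp add: r_def)
qed

lemma D1d: "x \<in> {0..1} \<Longrightarrow> (D1 has_real_derivative D2 x) (at x within {0..1})"
proof -
  assume x: "x \<in> {0..1}"
  show ?thesis
  proof (cases "x = 0")
    case False
    then have xp: "0 < x" "x \<le> 1" using x by auto
    have Wp: "0 < WW x" using Wpos xp by simp
    have r: "DERIV (root N) (WW x) :> inverse (real N * root N (WW x) ^ (N - Suc 0))"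
      by (rule DERIV_real_root[OF N0 Wp])
    have "((\<lambda>s. root N (WW s)) has_real_derivative inverse (real N * root N (WW x) ^ (N - Suc 0)) * FF x) (at x within {0..1})"
      by (rule DERIV_chain2[OF r WWd[OF x]])
    then have "((\<lambda>s. - lam * root N (WW s)) has_real_derivative - lam * (inverse (real N * root N (WW x) ^ (N - Suc 0)) * FF x)) (at x within {0..1})"
      by (rule DERIV_cmult)
    moreover have "- lam * (inverse (real N * root N (WW x) ^ (N - Suc 0)) * FF x) = D2 x"
    proof -
      have R: "RR x > 0" using RRpos xp by simp
      have "D2 x = - lam * g (u x) / (RR x / x)^(N-1)" by (simp add: D2_def rootQQ xp)
      also have "\<dots> = - lam * g (u x) * x^(N-1) / RR x^(N-1)" using R xp by (simp add: power_divide)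
      finally show ?thesis using R N0 by (simp add: FF_def RR_def field_simps)
    qed
    ultimately show ?thesis by (simp add: D1_def[abs_def] RR_def)
  next
    case True
    have "((\<lambda>y. - lam * root N (WW y / y^N)) \<longlongrightarrow> - lam * root N (g a)) (at 0 within {0..1})"
      by (intro tendsto_intros Wlim)
    moreover have "\<forall>\<^sub>F y in at 0 within {0..1}. - lam * root N (WW y / y^N) = (D1 y - D1 0) / (y - 0)"
      unfolding eventually_at_filter
    proof (rule always_eventually, intro allI impI)
      fix y :: real assume y: "y \<noteq> 0" "y \<in> {0..1}"
      then have yp: "0 < y" by auto
      have "root N (WW y / y^N) = root N (QQ y)" using yp by (simp add: QQ_def)
      also have "\<dots> = RR y / y" by (rule rootQQ[OF yp])
      finally show "- lam * root N (WW y / y^N) = (D1 y - D1 0) / (y - 0)"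
        by (simp add: D1_def RR0)
    qed
    ultimately have "((\<lambda>y. (D1 y - D1 0) / (y - 0)) \<longlongrightarrow> D2 0) (at 0 within {0..1})"
      using Lim_transform_eventually D2_0 by fastforce
    then show ?thesis using True by (simp add: has_field_derivative_iff)
  qed
qed

lemma D1_at: "z \<in> {0<..<1} \<Longrightarrow> (D1 has_real_derivative D2 z) (at z)"
  using D1d[of z] by (auto simp: at_within_Icc_at)

lemma D2c: "continuous_on {0..1} D2"
proof -
  have nz: "root N (QQ s)^(N-1) \<noteq> 0" if "s \<in> {0..1}" for s
  proof -
    have "0 < root N (QQ s)" using QQpos[OF that] N0 by (simp add: real_root_gt_zero)
    then show ?thesis by simp
  qed
  show ?thesis unfolding D2_def[abs_def]
    by (intro continuous_intros gcu QQc) (use nz in auto)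
qed

lemma ODE: "0 < r \<Longrightarrow> r < 1 \<Longrightarrow> ((\<lambda>s. (D1 s)^N) has_real_derivative ((-lam)^N * real N * r^(N-1) * g (u r))) (at r)"
proof -
  assume r: "0 < r" "r < 1"
  have "(WW has_real_derivative FF r) (at r)" using WWd[of r] r by (auto simp: at_within_Icc_at)
  then have "((\<lambda>s. (-lam)^N * WW s) has_real_derivative (-lam)^N * FF r) (at r)" by (rule DERIV_cmult)
  then have "((\<lambda>s. (D1 s)^N) has_real_derivative (-lam)^N * FF r) (at r)"
  proof (rule has_field_derivative_transform_within_open[where S="{0<..<1}"])
    show "open {0<..<1::real}" by simp
    show "r \<in> {0<..<1}" using r by simp
    fix s :: real assume s: "s \<in> {0<..<1}"
    have "0 \<le> WW s" using WWnn s by simp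
    then have rr: "root N (WW s)^N = WW s" using N0 by simp
    have "(D1 s)^N = (-lam)^N * (root N (WW s))^N" unfolding D1_def RR_def by (rule power_mult_distrib)
    then show "(-lam)^N * WW s = (D1 s)^N" using rr by simp
  qed
  then show ?thesis by (simp add: FF_def mult.assoc)
qed

lemma upos: "r \<in> {0<..<1} \<Longrightarrow> 0 < u r"
proof -
  assume r: "r \<in> {0<..<1}"
  have "continuous_on {r..1} u" by (rule continuous_on_subset[OF uc]) (use r in auto)
  moreover have "u differentiable (at z)" if "r < z" "z < 1" for z
    using ud_at[of z] that r real_differentiable_def by auto
  ultimately obtain l z where lz: "r < z" "z < 1" "DERIV u z :> l" "u 1 - u r = (1 - r) * l"
    using MVT[of r 1 u] r by auto
  have "l = D1 z" using DERIV_unique[OF lz(3) ud_at[of z]] lz r by auto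
  moreover have "D1 z < 0" using RRpos[of z] lz r lam by (simp add: D1_def)
  ultimately have "(1 - r) * l < 0" using r by (simp add: mult_pos_neg)
  then show ?thesis using lz(4) u1 by simp
qed

lemma D2neg: "z \<in> {0<..<1} \<Longrightarrow> D2 z < 0"
proof -
  assume z: "z \<in> {0<..<1}"
  have "0 < g (u z)" using gpos upos[OF z] by simp
  moreover have "0 < root N (QQ z) ^ (N-1)" using QQpos[of z] z N0 by (simp add: real_root_gt_zero)
  ultimately show ?thesis using lam by (simp add: D2_def divide_neg_pos)
qed

lemma D1dec: "0 < x \<Longrightarrow> x < y \<Longrightarrow> y < 1 \<Longrightarrow> D1 y < D1 x"
proof -
  assume xy: "0 < x" "x < y" "y < 1"
  have der: "DERIV D1 s :> D2 s" if "x \<le> s" "s \<le> y" for s using D1_at xy that by auto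
  obtain z where z: "x < z" "z < y" "D1 y - D1 x = (y - x) * D2 z"
    using MVT2[OF xy(2) der] by blast
  have "D2 z < 0" using D2neg z xy by simp
  then have "(y - x) * D2 z < 0" using xy by (simp add: mult_pos_neg)
  then show ?thesis using z by simp
qed

lemma reg_main:
  "\<exists>u' u''. C2_on_unit u u' u'' \<and>
     (\<forall>r. 0 < r \<and> r < 1 \<longrightarrow> ((\<lambda>s. (u' s)^N) has_real_derivative ((-lam)^N * real N * r^(N-1) * g (u r))) (at r)) \<and>
     u' 0 = 0 \<and> u 1 = 0 \<and> (\<forall>r\<in>{0<..<1}. u r > 0) \<and> strictly_concave_on {0<..<1} u"
proof (intro exI conjI)
  show "C2_on_unit u D1 D2" unfolding C2_on_unit_def using ud D1d D2c by blast
  show "\<forall>r. 0 < r \<and> r < 1 \<longrightarrow> ((\<lambda>s. (D1 s)^N) has_real_derivative ((-lam)^N * real N * r^(N-1) * g (u r))) (at r)"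
    using ODE by blast
  show "D1 0 = 0" by (rule D1_0)
  show "u 1 = 0" by (rule u1)
  show "\<forall>r\<in>{0<..<1}. u r > 0" using upos by blast
  show "strictly_concave_on {0<..<1} u" by (rule concave_from_deriv[OF ud_at D1dec])
qed

end

lemma core:
  fixes N :: nat and lam :: real and g :: "real \<Rightarrow> real"
  assumes N1: "N \<ge> 1" and lam: "lam > 0" and gc: "\<And>x. isCont g x"
    and gpos: "\<And>x. x > 0 \<Longrightarrow> g x > 0"
    and glo: "\<And>K. \<exists>\<alpha>>0. \<forall>x. 0 < x \<and> x \<le> \<alpha> \<longrightarrow> K * x^N \<le> g x"
    and ghi: "\<And>\<epsilon>. \<epsilon> > 0 \<Longrightarrow> \<exists>B. \<forall>x\<ge>B. g x \<le> \<epsilon> * x^N"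
  shows "\<exists>u u' u''. C2_on_unit u u' u'' \<and>
     (\<forall>r. 0 < r \<and> r < 1 \<longrightarrow> ((\<lambda>s. (u' s)^N) has_real_derivative ((-lam)^N * real N * r^(N-1) * g (u r))) (at r)) \<and>
     u' 0 = 0 \<and> u 1 = 0 \<and> (\<forall>r\<in>{0<..<1}. u r > 0) \<and> strictly_concave_on {0<..<1} u"
proof -
  have N0: "0 < N" using N1 by simp
  have g0: "0 \<le> g x" if "0 \<le> x" for x
  proof (cases "x = 0")
    case True
    have "(\<lambda>n. g (inverse (real (Suc n)))) \<longlonglongrightarrow> g 0"
      by (rule isCont_tendsto_compose[OF gc LIMSEQ_inverse_real_of_nat])
    moreover have "\<forall>n. 0 \<le> g (inverse (real (Suc n)))" by (intro allI less_imp_le gpos) simp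
    ultimately have "0 \<le> g 0" using LIMSEQ_le_const by blast
    then show ?thesis using True by simp
  next
    case False then show ?thesis using gpos[of x] that by simp
  qed
  define c :: real where "c = (1 / (2 * lam))^N"
  have cp: "c > 0" unfolding c_def using lam by simp
  obtain B where B: "\<And>x. x \<ge> B \<Longrightarrow> g x \<le> c * x^N" using ghi[OF cp] by blast
  define B' where "B' = max B 1"
  have gcB: "continuous_on {0..B'} g" using gc by (simp add: continuous_at_imp_continuous_on)
  have "\<exists>x\<in>{0..B'}. \<forall>y\<in>{0..B'}. g y \<le> g x"
    by (rule continuous_attains_sup[OF compact_Icc _ gcB]) (auto simp: B'_def)
  then obtain xm where xm: "xm \<in> {0..B'}" "\<And>y. y \<in> {0..B'} \<Longrightarrow> g y \<le> g xm" by blast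
  define C where "C = g xm"
  have C0: "0 \<le> C" unfolding C_def using g0 xm by simp
  define A where "A = max B' (C / c + 1)"
  have A1: "A \<ge> 1" "A \<ge> B'" "A \<ge> C / c + 1" by (auto simp: A_def B'_def)
  have Apos: "A > 0" using A1 by simp
  have "A \<le> A^N" using self_le_power[OF A1(1) N0] .
  then have "c * A \<le> c * A^N" using cp by simp
  moreover have "C \<le> c * A"
  proof -
    have "C / c \<le> A" using A1 by simp
    then show ?thesis using cp by (simp add: divide_le_eq mult.commute)
  qed
  ultimately have CA: "C \<le> c * A^N" by simp
  define M where "M = c * A^N"
  have gM: "g x \<le> M" if "x \<in> {0..A}" for x
  proof (cases "x \<le> B'")
    case True then show ?thesis using xm(2)[of x] that CA by (simp add: M_def C_def)
  next
    case False
    then have "x \<ge> B" by (simp add: B'_def)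
    then have "g x \<le> c * x^N" by (rule B)
    also have "\<dots> \<le> c * A^N" using that cp by (intro mult_left_mono power_mono) auto
    finally show ?thesis by (simp add: M_def)
  qed
  have rootM: "root N M = A / (2 * lam)"
  proof -
    have "root N c = 1 / (2 * lam)" unfolding c_def using lam N0 by (simp add: real_root_power_cancel)
    moreover have "root N (A^N) = A" using Apos N0 by (simp add: real_root_power_cancel)
    ultimately show ?thesis by (simp add: M_def real_root_mult)
  qed
  have hiA: "lam * root N M < A" using rootM lam Apos by (simp add: field_simps)
  define G where "G x = g (max 0 (min x A))" for x
  have Gc: "isCont G x" for x unfolding G_def[abs_def] by (rule isCont_o2[OF _ gc]) (intro continuous_intros)
  have G0: "0 \<le> G x" for x unfolding G_def by (rule g0) simp
  have GM: "G x \<le> M" for x unfolding G_def by (rule gM) (use Apos in auto)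
  interpret moloc N lam M G using N1 lam Gc G0 GM by unfold_locales auto
  define K :: real where "K = (8 / lam)^N"
  obtain \<alpha>0 where \<alpha>0: "\<alpha>0 > 0" "\<And>x. 0 < x \<Longrightarrow> x \<le> \<alpha>0 \<Longrightarrow> K * x^N \<le> g x" using glo[of K] by blast
  define \<alpha> where "\<alpha> = min \<alpha>0 A"
  have al: "0 < \<alpha>" "\<alpha> \<le> A" "\<alpha> \<le> \<alpha>0" using \<alpha>0 Apos by (auto simp: \<alpha>_def)
  define c' where "c' = K * (\<alpha>/2)^N"
  have c'p: "c' > 0" unfolding c'_def K_def using lam al by simp
  have c'G: "c' \<le> G x" if "\<alpha>/2 < x" "x \<le> \<alpha>" for x
  proof -
    have x: "0 < x" "x \<le> A" "x \<le> \<alpha>0" using that al by auto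
    have "G x = g x" unfolding G_def using x by simp
    moreover have "K * (\<alpha>/2)^N \<le> K * x^N" using that al unfolding K_def using lam
      by (intro mult_left_mono power_mono) auto
    ultimately show ?thesis using \<alpha>0(2)[OF x(1) x(3)] by (simp add: c'_def)
  qed
  have big: "4 * \<alpha> \<le> lam * root N c'"
  proof -
    have "root N K = 8 / lam" unfolding K_def using lam N0 by (simp add: real_root_power_cancel)
    moreover have "root N ((\<alpha>/2)^N) = \<alpha>/2" using al N0 by (simp add: real_root_power_cancel)
    ultimately have "root N c' = (8 / lam) * (\<alpha>/2)" by (simp add: c'_def real_root_mult)
    then show ?thesis using lam by simp
  qed
  obtain a0 u where au: "a0 \<in> {\<alpha>..A}" "continuous_on {0..1} u" "\<And>r. r\<in>{0..1} \<Longrightarrow> u r = Dop a0 0 u r" "u 1 = 0"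
    using exists_limit[OF al(1,2) hiA c'p c'G big] by blast
  have unn: "0 \<le> u t" if "t \<in> {0..1}" for t
    using fix_anti[OF order_refl au(2) au(3), of t 1] that au(4) by auto
  have ule: "u t \<le> A" if "t \<in> {0..1}" for t
    using Dop_le(1)[OF order_refl au(2) that, of a0] au(3)[OF that] au(1) by auto
  have Gu: "G (u t) = g (u t)" if "t \<in> {0..1}" for t
    unfolding G_def using unn[OF that] ule[OF that] by simp
  have ufix: "u r = a0 - lam * integral {0..r} (\<lambda>s. root N (integral {0..s} (\<lambda>t. real N * t^(N-1) * g (u t))))"
    if r: "r \<in> {0..1}" for r
  proof -
    have "Wf 0 u s = integral {0..s} (\<lambda>t. real N * t^(N-1) * g (u t))" if "s \<in> {0..r}" for s
      unfolding Wf_def by (rule integral_cong) (use that r Gu in auto)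
    then have "integral {0..r} (\<lambda>s. root N (Wf 0 u s)) = integral {0..r} (\<lambda>s. root N (integral {0..s} (\<lambda>t. real N * t^(N-1) * g (u t))))"
      by (intro integral_cong) auto
    then show ?thesis using au(3)[OF r] by (simp add: Dop_def)
  qed
  interpret regloc N lam a0 g u
    by unfold_locales (use N1 lam al au gc gpos g0 ufix unn in auto)
  show ?thesis using reg_main by blast
qed

lemma eps_f0:
  fixes F :: "real \<Rightarrow> real"
  assumes "filterlim (\<lambda>s. F s / s ^ N) at_top (at 0)"
  shows "\<exists>d>0. \<forall>s. s \<noteq> 0 \<and> \<bar>s\<bar> < d \<longrightarrow> K \<le> F s / s^N"
proof -
  have "eventually (\<lambda>s. K \<le> F s / s^N) (at 0)" using assms by (simp add: filterlim_at_top)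
  then show ?thesis unfolding eventually_at by (auto simp: dist_real_def)
qed

lemma eps_finf:
  fixes F :: "real \<Rightarrow> real"
  assumes "((\<lambda>s. F s / s ^ N) \<longlongrightarrow> 0) at_infinity" "\<epsilon> > 0"
  shows "\<exists>b. \<forall>s. b \<le> \<bar>s\<bar> \<longrightarrow> \<bar>F s / s^N\<bar> < \<epsilon>"
proof -
  have "eventually (\<lambda>s. dist (F s / s^N) 0 < \<epsilon>) at_infinity" using assms unfolding tendsto_iff by blast
  then show ?thesis unfolding eventually_at_infinity by (auto simp: dist_real_def)
qed

lemma core_hyps:
  fixes F :: "real \<Rightarrow> real" and N :: nat
  assumes a: "\<And>K. \<exists>d>0. \<forall>s. s \<noteq> 0 \<and> \<bar>s\<bar> < d \<longrightarrow> K \<le> F s / s^N"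
    and b: "\<And>\<epsilon>. \<epsilon> > 0 \<Longrightarrow> \<exists>b. \<forall>s. b \<le> \<bar>s\<bar> \<longrightarrow> \<bar>F s / s^N\<bar> < \<epsilon>"
  shows "\<And>K. \<exists>\<alpha>>0. \<forall>x. 0 < x \<and> x \<le> \<alpha> \<longrightarrow> K * x^N \<le> F x"
    and "\<And>\<epsilon>. \<epsilon> > 0 \<Longrightarrow> \<exists>B. \<forall>x\<ge>B. F x \<le> \<epsilon> * x^N"
proof -
  fix K
  obtain d where d: "d > 0" "\<And>s. s \<noteq> 0 \<Longrightarrow> \<bar>s\<bar> < d \<Longrightarrow> K \<le> F s / s^N" using a[of K] by blast
  show "\<exists>\<alpha>>0. \<forall>x. 0 < x \<and> x \<le> \<alpha> \<longrightarrow> K * x^N \<le> F x"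
  proof (intro exI[of _ "d/2"] conjI allI impI)
    show "d/2 > 0" using d by simp
    fix x :: real assume x: "0 < x \<and> x \<le> d/2"
    then have "K \<le> F x / x^N" using d by auto
    then show "K * x^N \<le> F x" using x by (simp add: pos_le_divide_eq)
  qed
next
  fix \<epsilon> :: real assume e: "\<epsilon> > 0"
  obtain b0 where b0: "\<And>s. b0 \<le> \<bar>s\<bar> \<Longrightarrow> \<bar>F s / s^N\<bar> < \<epsilon>" using b[OF e] by blast
  show "\<exists>B. \<forall>x\<ge>B. F x \<le> \<epsilon> * x^N"
  proof (intro exI[of _ "max b0 1"] allI impI)
    fix x :: real assume x: "max b0 1 \<le> x"
    then have "\<bar>F x / x^N\<bar> < \<epsilon>" using b0[of x] by auto
    then have "F x / x^N < \<epsilon>" using abs_ge_self[of "F x / x^N"] by linarith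
    moreover have "0 < x^N" using x by simp
    ultimately show "F x \<le> \<epsilon> * x^N" by (simp add: divide_less_eq less_imp_le)
  qed
qed

lemma negq: "((-1)^N * F (-s)) / s^N = F (-s) / (-s :: real)^N"
proof (cases "even N")
  case True
  then have "(-1::real)^N = 1" by simp
  then show ?thesis unfolding power_minus[of s N] by simp
next
  case False
  then have "(-1::real)^N = -1" by simp
  then show ?thesis unfolding power_minus[of s N] by simp
qed

theorem theorem4p7:
  fixes N :: nat and f :: "real \<Rightarrow> real" and lam :: real
  assumes N: "N \<ge> 1"
    and f_cont: "continuous_on UNIV f"
    and f_sign: "\<And>s. s \<noteq> 0 \<Longrightarrow> f s * s ^ N > 0"
    and f0: "filterlim (\<lambda>s. f s / s ^ N) at_top (at 0)"
    and finf: "((\<lambda>s. f s / s ^ N) \<longlongrightarrow> 0) at_infinity"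
    and lam: "lam > 0"
  shows "\<exists>up um.
           solves_MO N lam f up \<and> solves_MO N lam f um \<and>
           (\<forall>r\<in>{0<..<1}. up r > 0) \<and> strictly_concave_on {0<..<1} up \<and>
           (\<forall>r\<in>{0<..<1}. um r < 0) \<and> strictly_convex_on {0<..<1} um"
proof -
  have fc: "isCont f x" for x using f_cont by (simp add: continuous_on_eq_continuous_at)
  have sq: "(-1::real)^N * (-1)^N = 1" by (cases "even N") auto
  have fa: "\<exists>d>0. \<forall>s. s \<noteq> 0 \<and> \<bar>s\<bar> < d \<longrightarrow> K \<le> f s / s^N" for K by (rule eps_f0[OF f0])
  have fb: "\<exists>b. \<forall>s. b \<le> \<bar>s\<bar> \<longrightarrow> \<bar>f s / s^N\<bar> < \<epsilon>" if "\<epsilon> > 0" for \<epsilon> by (rule eps_finf[OF finf that])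
  define g1 where "g1 x = (-1)^N * f (-x)" for x
  have g1c: "isCont g1 x" for x unfolding g1_def[abs_def]
    by (intro continuous_intros isCont_o2[OF _ fc])
  have g1q: "g1 s / s^N = f (-s) / (-s)^N" for s unfolding g1_def by (rule negq)
  have g1pos: "g1 x > 0" if "x > 0" for x
  proof -
    have h1: "0 < f (-x) * (-x)^N" using f_sign[of "-x"] that by simp
    have h2: "f (-x) * (-x)^N = g1 x * x^N" unfolding g1_def power_minus[of x N] by (simp add: algebra_simps)
    have "0 < g1 x * x^N" using h1 h2 by simp
    moreover have "0 < x^N" using that by simp
    ultimately show ?thesis by (rule zero_less_mult_pos2)
  qed
  have g1a: "\<exists>d>0. \<forall>s. s \<noteq> 0 \<and> \<bar>s\<bar> < d \<longrightarrow> K \<le> g1 s / s^N" for K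
  proof -
    obtain d where d: "d > 0" "\<forall>s. s \<noteq> 0 \<and> \<bar>s\<bar> < d \<longrightarrow> K \<le> f s / s^N" using fa[of K] by blast
    show ?thesis
    proof (intro exI[of _ d] conjI allI impI)
      fix s :: real assume "s \<noteq> 0 \<and> \<bar>s\<bar> < d"
      then show "K \<le> g1 s / s^N" using d(2)[rule_format, of "-s"] g1q[of s] by simp
    qed (rule d(1))
  qed
  have g1b: "\<exists>b. \<forall>s. b \<le> \<bar>s\<bar> \<longrightarrow> \<bar>g1 s / s^N\<bar> < \<epsilon>" if e: "\<epsilon> > 0" for \<epsilon>
  proof -
    obtain b where b: "\<forall>s. b \<le> \<bar>s\<bar> \<longrightarrow> \<bar>f s / s^N\<bar> < \<epsilon>" using fb[OF e] by blast
    show ?thesis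
    proof (intro exI[of _ b] allI impI)
      fix s :: real assume "b \<le> \<bar>s\<bar>"
      then show "\<bar>g1 s / s^N\<bar> < \<epsilon>" using b[rule_format, of "-s"] g1q[of s] by simp
    qed
  qed
  obtain u u' u'' where U: "C2_on_unit u u' u''"
    "\<forall>r. 0 < r \<and> r < 1 \<longrightarrow> ((\<lambda>s. (u' s)^N) has_real_derivative ((-lam)^N * real N * r^(N-1) * g1 (u r))) (at r)"
    "u' 0 = 0" "u 1 = 0" "\<forall>r\<in>{0<..<1}. u r > 0" "strictly_concave_on {0<..<1} u"
    using core[OF N lam g1c g1pos core_hyps[OF g1a g1b]] by blast
  have solu: "solves_MO N lam f u"
    unfolding solves_MO_def
  proof (intro exI conjI allI impI)
    show "C2_on_unit u u' u''" by (rule U(1))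
    show "u' 0 = 0" "u 1 = 0" by (rule U(3), rule U(4))
    fix r :: real assume r: "0 < r \<and> r < 1"
    have eq: "(-lam)^N * real N * r^(N-1) * g1 (u r) = lam^N * real N * r^(N-1) * f (- u r)"
    proof -
      have "(-lam)^N * g1 (u r) = ((-1)^N * (-1)^N) * lam^N * f (- u r)"
        unfolding g1_def power_minus[of lam N] by (simp add: algebra_simps)
      then have h: "(-lam)^N * g1 (u r) = lam^N * f (- u r)" using sq by simp
      have "(-lam)^N * real N * r^(N-1) * g1 (u r) = (real N * r^(N-1)) * ((-lam)^N * g1 (u r))"
        by (simp only: mult_ac)
      also have "\<dots> = (real N * r^(N-1)) * (lam^N * f (- u r))" by (simp only: h)
      also have "\<dots> = lam^N * real N * r^(N-1) * f (- u r)" by (simp only: mult_ac)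
      finally show ?thesis .
    qed
    have "((\<lambda>s. (u' s)^N) has_real_derivative ((-lam)^N * real N * r^(N-1) * g1 (u r))) (at r)"
      using U(2) r by blast
    then show "((\<lambda>s. (u' s)^N) has_real_derivative lam^N * real N * r^(N-1) * f (- u r)) (at r)"
      unfolding eq .
  qed
  have fpos: "f x > 0" if xp: "x > 0" for x
  proof -
    have "0 < f x * x^N" by (rule f_sign) (use xp in simp)
    moreover have "0 < x^N" using xp by simp
    ultimately show ?thesis by (rule zero_less_mult_pos2)
  qed
  obtain v v' v'' where V: "C2_on_unit v v' v''"
    "\<forall>r. 0 < r \<and> r < 1 \<longrightarrow> ((\<lambda>s. (v' s)^N) has_real_derivative ((-lam)^N * real N * r^(N-1) * f (v r))) (at r)"
    "v' 0 = 0" "v 1 = 0" "\<forall>r\<in>{0<..<1}. v r > 0" "strictly_concave_on {0<..<1} v"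
    using core[OF N lam fc fpos core_hyps[OF fa fb]] by blast
  have solv: "solves_MO N lam f (\<lambda>x. - v x)"
    unfolding solves_MO_def
  proof (intro exI conjI allI impI)
    show "C2_on_unit (\<lambda>x. - v x) (\<lambda>x. - v' x) (\<lambda>x. - v'' x)"
      unfolding C2_on_unit_def
    proof (intro conjI ballI)
      fix x :: real assume x: "x \<in> {0..1}"
      show "((\<lambda>x. - v x) has_real_derivative - v' x) (at x within {0..1})"
        using V(1) x unfolding C2_on_unit_def by (intro DERIV_minus) blast
      show "((\<lambda>x. - v' x) has_real_derivative - v'' x) (at x within {0..1})"
        using V(1) x unfolding C2_on_unit_def by (intro DERIV_minus) blast
    next
      have "continuous_on {0..1} v''" using V(1) unfolding C2_on_unit_def by blast
      then show "continuous_on {0..1} (\<lambda>x. - v'' x)" by (rule continuous_on_minus)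
    qed
    show "- v' 0 = 0" "- v 1 = 0" using V(3,4) by simp_all
    fix r :: real assume r: "0 < r \<and> r < 1"
    have d: "((\<lambda>s. (-1)^N * (v' s)^N) has_real_derivative (-1)^N * ((-lam)^N * real N * r^(N-1) * f (v r))) (at r)"
      using V(2) r by (intro DERIV_cmult) auto
    have e1: "(\<lambda>s. (-1)^N * (v' s)^N) = (\<lambda>s. (- v' s)^N)" by (rule ext) (rule power_minus[symmetric])
    have e2: "(-1)^N * ((-lam)^N * real N * r^(N-1) * f (v r)) = lam^N * real N * r^(N-1) * f (- (- v r))"
    proof -
      have "(-1)^N * (-lam)^N = ((-1)^N * (-1)^N) * (lam::real)^N" unfolding power_minus[of lam N] by (simp add: algebra_simps)
      then have h: "(-1)^N * (-lam)^N = lam^N" using sq by simp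
      have "(-1)^N * ((-lam)^N * real N * r^(N-1) * f (v r)) = ((-1)^N * (-lam)^N) * (real N * r^(N-1) * f (v r))"
        by (simp only: mult_ac)
      also have "\<dots> = lam^N * (real N * r^(N-1) * f (v r))" by (simp only: h)
      also have "\<dots> = lam^N * real N * r^(N-1) * f (- (- v r))" by (simp only: mult_ac minus_minus)
      finally show ?thesis .
    qed
    show "((\<lambda>s. (- v' s)^N) has_real_derivative lam^N * real N * r^(N-1) * f (- (- v r))) (at r)"
      using d unfolding e1 e2 .
  qed
  show ?thesis
  proof (intro exI conjI)
    show "solves_MO N lam f u" by (rule solu)
    show "solves_MO N lam f (\<lambda>x. - v x)" by (rule solv)
    show "\<forall>r\<in>{0<..<1}. u r > 0" by (rule U(5))
    show "strictly_concave_on {0<..<1} u" by (rule U(6))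
    show "\<forall>r\<in>{0<..<1}. - v r < 0" using V(5) by simp
    show "strictly_convex_on {0<..<1} (\<lambda>x. - v x)" using V(6) by (simp add: strictly_concave_on_def)
  qed
qed

end
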